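(* For any two cylindric partitions $\alpha,\beta$ on $\mathcal C_{k,n}$ and variable sets $\mathbf x=(x_a)_{a\in A}$, $\mathbf y=(y_a)_{a\in A}$, \[ \sum_{\substack{\mu\in\operatorname{Cylpar};\\ \mu\subseteq\alpha;\ \mu\subseteq\beta}} s_{\alpha/\mu}(\mathbf x)\,s_{\beta/\mu}(\mathbf y)=\sum_{\substack{\lambda\in\operatorname{Cylpar};\\ \alpha\subseteq\lambda;\ \beta\subseteq\lambda}} s_{\lambda/\beta}(\mathbf x)\,s_{\lambda/\alpha}(\mathbf y). \]
   Context: Fix integers $n>k\ge 1$. A cylindric partition is a weakly decreasing sequence $(\lambda_m)_{m\in\mathbb Z}$ of integers with $\lambda_m=\lambda_{m+k}+n-k$ for all $m$; $\operatorname{Cylpar}$ is the set of cylindric partitions. A point $(x,y)\in\mathbb Z^2$ lies in $\lambda$ if $y\le\lambda_x$. A box is an equivalence class of points modulo translation by integer multiples of $(-k,n-k)$; $\pi$ is the projection; a box lies in $\lambda$ iff its representatives do. $\mu\subseteq\lambda$ means $\mu_m\le\lambda_m$ for all $m$; the boxes of $\lambda/\mu$ are the (finitely many) boxes in $\lambda$ not in $\mu$. Fix a totally ordered alphabet $A$. A semistandard cylindric tableau of shape $\lambda/\mu$ is a map $R$ from the boxes of $\lambda/\mu$ to $A$ such that $R(\pi(x,y_1))\le R(\pi(x,y_2))$ whenever the points $(x,y_1),(x,y_2)$ lie in $\lambda$ but not in $\mu$ and $y_1<y_2$, and $R(\pi(x_1,y))<R(\pi(x_2,y))$ whenever $(x_1,y),(x_2,y)$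 lie in $\lambda$ but not $\mu$ and $x_1<x_2$. $\operatorname{SSCT}(\lambda/\mu)$ is the set of these. For a variable set $\mathbf x=(x_a)_{a\in A}$ (distinct commuting indeterminates), $\mathbf x^{\operatorname{wt}(R)}=\prod_{B}x_{R(B)}$ over the boxes $B$ of $\lambda/\mu$, and the cylindric Schur function is $s_{\lambda/\mu}(\mathbf x)=\sum_{R\in\operatorname{SSCT}(\lambda/\mu)}\mathbf x^{\operatorname{wt}(R)}$. The identity is an identity of formal power series in $\mathbf x,\mathbf y$. *)

theory Defs
  imports Main "HOL-Library.FuncSet"
begin

definition cylpar :: "int \<Rightarrow> int \<Rightarrow> (int \<Rightarrow> int) set" where
  "cylpar k n = {lam. (\<forall>m. lam (m + 1) \<le> lam m) \<and> (\<forall>m. lam m = lam (m + k) + (n - k))}"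

definition in_cp :: "(int \<Rightarrow> int) \<Rightarrow> int \<times> int \<Rightarrow> bool" where
  "in_cp lam p \<longleftrightarrow> snd p \<le> lam (fst p)"

text \<open>The box (projection pi) of a point: its class modulo translation by
  integer multiples of (-k, n-k).\<close>
definition cbox :: "int \<Rightarrow> int \<Rightarrow> int \<times> int \<Rightarrow> (int \<times> int) set" where
  "cbox k n p = {(fst p - j * k, snd p + j * (n - k)) | j. True}"

definition skew_boxes :: "int \<Rightarrow> int \<Rightarrow> (int \<Rightarrow> int) \<Rightarrow> (int \<Rightarrow> int) \<Rightarrow> (int \<times> int) set set" where
  "skew_boxes k n lam mu = cbox k n ` {p. in_cp lam p \<and> \<not> in_cp mu p}"

definition ssct :: "int \<Rightarrow> int \<Rightarrow> (int \<Rightarrow> int) \<Rightarrow> (int \<Rightarrow> int) \<Rightarrow> ((int \<times> int) set \<Rightarrow> 'a::linorder) set" where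
  "ssct k n lam mu = {R. R \<in> extensional (skew_boxes k n lam mu) \<and>
     (\<forall>x y1 y2. in_cp lam (x, y1) \<and> \<not> in_cp mu (x, y1) \<and> in_cp lam (x, y2) \<and> \<not> in_cp mu (x, y2)
        \<and> y1 < y2 \<longrightarrow> R (cbox k n (x, y1)) \<le> R (cbox k n (x, y2))) \<and>
     (\<forall>x1 x2 y. in_cp lam (x1, y) \<and> \<not> in_cp mu (x1, y) \<and> in_cp lam (x2, y) \<and> \<not> in_cp mu (x2, y)
        \<and> x1 < x2 \<longrightarrow> R (cbox k n (x1, y)) < R (cbox k n (x2, y)))}"

definition tab_wt :: "int \<Rightarrow> int \<Rightarrow> (int \<Rightarrow> int) \<Rightarrow> (int \<Rightarrow> int) \<Rightarrow> ((int \<times> int) set \<Rightarrow> 'a) \<Rightarrow> 'a \<Rightarrow> nat" where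
  "tab_wt k n lam mu R a = card {B \<in> skew_boxes k n lam mu. R B = a}"

text \<open>Cylindric Schur function s_{lam/mu}, as a formal power series given by its
  coefficient function: the coefficient of the monomial with exponent vector e.\<close>
definition cyl_schur :: "int \<Rightarrow> int \<Rightarrow> (int \<Rightarrow> int) \<Rightarrow> (int \<Rightarrow> int) \<Rightarrow> ('a::linorder \<Rightarrow> nat) \<Rightarrow> nat" where
  "cyl_schur k n lam mu e = card {R \<in> ssct k n lam mu. tab_wt k n lam mu R = e}"

end

theory Submission
  imports Defs
begin

lemma threshold_unique:
  fixes lo hi a b :: int
  assumes "lo \<le> a" "a \<le> hi" "lo \<le> b" "b \<le> hi"
    and "\<And>y. lo < y \<Longrightarrow> y \<le> hi \<Longrightarrow> (y \<le> a \<longleftrightarrow> y \<le> b)"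
  shows "a = b"
proof (rule ccontr)
  assume "a \<noteq> b"
  then consider "a < b" | "b < a" by linarith
  then show False
  proof cases
    case 1 then show ?thesis using assms(1,4) assms(5)[of b] by linarith
  next
    case 2 then show ?thesis using assms(3,2) assms(5)[of a] by linarith
  qed
qed

definition fsum :: "('b \<Rightarrow> nat) \<Rightarrow> nat" where
  "fsum g = (\<Sum>x | g x \<noteq> 0. g x)"

lemma fsum_eq:
  assumes "finite A" "\<And>x. g x \<noteq> 0 \<Longrightarrow> x \<in> A"
  shows "fsum g = sum g A"
  unfolding fsum_def
  by (rule sum.mono_neutral_left) (use assms in auto)

lemma fsum_cmult: "fsum (\<lambda>x. c * g x) = c * fsum g"
proof (cases "c = 0")
  case True then show ?thesis by (simp add: fsum_def)
next
  case False
  then have "{x. c * g x \<noteq> 0} = {x. g x \<noteq> 0}" by auto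
  then show ?thesis using False by (simp add: fsum_def sum_distrib_left)
qed

lemma fsum_multc: "fsum (\<lambda>x. g x * c) = fsum g * c"
  using fsum_cmult[of c g] by (simp add: mult.commute)

lemma fsum_swap:
  assumes "finite A" "finite B" "\<And>x y. g x y \<noteq> 0 \<Longrightarrow> x \<in> A \<and> y \<in> B"
  shows "fsum (\<lambda>x. fsum (\<lambda>y. g x y)) = fsum (\<lambda>y. fsum (\<lambda>x. g x y))"
proof -
  have i1: "fsum (\<lambda>y. g x y) = sum (g x) B" for x
    by (rule fsum_eq) (use assms in auto)
  have i2: "fsum (\<lambda>x. g x y) = sum (\<lambda>x. g x y) A" for y
    by (rule fsum_eq) (use assms in auto)
  have "fsum (\<lambda>x. fsum (\<lambda>y. g x y)) = sum (\<lambda>x. sum (g x) B) A"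
    unfolding i1 by (rule fsum_eq) (use assms in \<open>auto dest: sum.not_neutral_contains_not_neutral\<close>)
  also have "\<dots> = sum (\<lambda>y. sum (\<lambda>x. g x y) A) B" by (rule sum.swap)
  also have "\<dots> = fsum (\<lambda>y. fsum (\<lambda>x. g x y))"
    unfolding i2 by (rule fsum_eq[symmetric]) (use assms in \<open>auto dest: sum.not_neutral_contains_not_neutral\<close>)
  finally show ?thesis .
qed

lemma fsum_single: "fsum (\<lambda>x. if x = a then c else 0) = c"
proof -
  have "fsum (\<lambda>x. if x = a then c else 0) = sum (\<lambda>x. if x = a then c else 0) {a}"
    by (rule fsum_eq) (auto split: if_splits)
  then show ?thesis by simp
qed

lemma fsum_01:
  assumes "\<And>x. g x \<le> 1"
  shows "fsum g = card {x. g x \<noteq> 0}"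
proof -
  have "\<And>x. g x \<noteq> 0 \<Longrightarrow> g x = 1" using assms le_antisym by (metis One_nat_def less_one not_le)
  then show ?thesis unfolding fsum_def by (simp add: card_eq_sum)
qed

locale cp =
  fixes k n :: int
  assumes k_pos: "1 \<le> k" and kn: "k < n"
begin

abbreviation C where "C \<equiv> cylpar k n"

lemma C_dec: "lam \<in> C \<Longrightarrow> lam (m + 1) \<le> lam m"
  unfolding cylpar_def by blast

lemma C_per: assumes "lam \<in> C" shows "lam (m + k) = lam m - (n - k)"
proof -
  have "lam m = lam (m + k) + (n - k)" using assms unfolding cylpar_def by blast
  then show ?thesis by linarith
qed

lemma C_mono_nat: "lam \<in> C \<Longrightarrow> lam (a + int d) \<le> lam a"
proof (induction d)
  case 0 then show ?case by simp
next
  case (Suc d)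
  have "lam (a + int (Suc d)) = lam ((a + int d) + 1)" by (rule arg_cong[where f=lam]) simp
  also have "\<dots> \<le> lam (a + int d)" using C_dec Suc by blast
  finally show ?case using Suc by linarith
qed

lemma C_mono: "lam \<in> C \<Longrightarrow> a \<le> b \<Longrightarrow> lam b \<le> lam a"
  using C_mono_nat[of lam a "nat (b - a)"] by simp

lemma C_shift_nat: assumes a: "lam \<in> C" shows "lam (m + int j * k) = lam m - int j * (n - k)"
proof (induction j arbitrary: m)
  case 0 then show ?case by simp
next
  case (Suc j)
  have "lam (m + int (Suc j) * k) = lam ((m + int j * k) + k)" by (rule arg_cong[where f=lam]) (simp add: algebra_simps)
  also have "\<dots> = lam (m + int j * k) - (n - k)" using C_per a by blast
  also have "\<dots> = lam m - int j * (n - k) - (n - k)" using Suc.IH by simp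
  finally show ?case by (simp add: algebra_simps)
qed

lemma C_shift: assumes a: "lam \<in> C" shows "lam (m + j * k) = lam m - j * (n - k)"
proof (cases "j \<ge> 0")
  case True
  then show ?thesis using C_shift_nat[OF a, of m "nat j"] by simp
  next
  case False
  have "lam ((m + j * k) + int (nat (-j)) * k) = lam (m + j*k) - int (nat (-j)) * (n - k)"
    using C_shift_nat[OF a] by blast
  moreover have "(m + j * k) + int (nat (-j)) * k = m" using False by (simp add: algebra_simps)
  ultimately show ?thesis using False by (simp add: algebra_simps)
qed

lemma C_modk: "lam \<in> C \<Longrightarrow> lam x = lam (x mod k) - (x div k) * (n - k)"
  using C_shift[of lam "x mod k" "x div k"] by (simp add: mult.commute)

lemma C_eq:
  assumes "lam \<in> C" "mu \<in> C" "\<And>x. 0 \<le> x \<Longrightarrow> x < k \<Longrightarrow> lam x = mu x"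
  shows "lam = mu"
proof
  fix x
  have "0 \<le> x mod k" "x mod k < k" using k_pos by auto
  then have "lam (x mod k) = mu (x mod k)" using assms(3) by blast
  then show "lam x = mu x" using C_modk[OF assms(1), of x] C_modk[OF assms(2), of x] by linarith
qed


definition D where "D lam mu = {p. in_cp lam p \<and> \<not> in_cp mu p}"
definition Fd :: "(int \<Rightarrow> int) \<Rightarrow> (int \<Rightarrow> int) \<Rightarrow> (int \<times> int) set" where "Fd lam mu = {(x,y). 0 \<le> x \<and> x < k \<and> mu x < y \<and> y \<le> lam x}"
definition sz :: "(int \<Rightarrow> int) \<Rightarrow> (int \<Rightarrow> int) \<Rightarrow> int" where
  "sz lam mu = (\<Sum>x\<in>{0..<k}. lam x - mu x)"
abbreviation B where "B \<equiv> cbox k n"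
abbreviation SK where "SK \<equiv> skew_boxes k n"

lemma SK_def2: "SK lam mu = B ` D lam mu"
  by (simp add: skew_boxes_def D_def)

lemma cbox_eq_iff: "B p = B q \<longleftrightarrow> (\<exists>j. q = (fst p - j*k, snd p + j*(n-k)))"
proof
  assume "B p = B q"
  moreover have "q \<in> B q" unfolding cbox_def by (auto intro!: exI[of _ 0])
  ultimately show "\<exists>j. q = (fst p - j*k, snd p + j*(n-k))" unfolding cbox_def by auto
next
  assume "\<exists>j. q = (fst p - j*k, snd p + j*(n-k))"
  then obtain j where q: "q = (fst p - j*k, snd p + j*(n-k))" by blast
  show "B p = B q"
  proof
    show "B p \<subseteq> B q"
    proof
      fix z assume "z \<in> B p"
      then obtain i where "z = (fst p - i*k, snd p + i*(n-k))" unfolding cbox_def by auto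
      then have "z = (fst q - (i - j)*k, snd q + (i - j)*(n-k))" using q by (auto simp: algebra_simps)
      then show "z \<in> B q" unfolding cbox_def by blast
    qed
    show "B q \<subseteq> B p"
    proof
      fix z assume "z \<in> B q"
      then obtain i where "z = (fst q - i*k, snd q + i*(n-k))" unfolding cbox_def by auto
      then have "z = (fst p - (i + j)*k, snd p + (i + j)*(n-k))" using q by (auto simp: algebra_simps)
      then show "z \<in> B p" unfolding cbox_def by blast
    qed
  qed
qed

lemma cbox_shift: "B (x - j*k, y + j*(n-k)) = B (x, y)"
  using cbox_eq_iff[of "(x,y)" "(x - j*k, y + j*(n-k))"] by auto

lemma cbox_shift1: "B (x + k, y) = B (x, y + (n - k))"
  using cbox_shift[of "x + k" 1 y] by simp

lemma in_cp_shift: assumes "lam \<in> C"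
  shows "in_cp lam (x - j*k, y + j*(n-k)) \<longleftrightarrow> in_cp lam (x, y)"
proof -
  have "lam (x + (-j)*k) = lam x - (-j)*(n-k)" by (rule C_shift[OF assms])
  then have "lam (x - j*k) = lam x + j*(n-k)" by (simp add: algebra_simps)
  then show ?thesis unfolding in_cp_def by auto
qed

lemma box_in: assumes "lam \<in> C" "B p = B q" shows "in_cp lam p \<longleftrightarrow> in_cp lam q"
proof -
  obtain j where q: "q = (fst p - j*k, snd p + j*(n-k))" using assms(2) cbox_eq_iff by blast
  show ?thesis using in_cp_shift[OF assms(1), of "fst p" j "snd p"] q by (cases p) auto
qed

lemma SK_mem: assumes "lam \<in> C" "mu \<in> C"
  shows "B p \<in> SK lam mu \<longleftrightarrow> in_cp lam p \<and> \<not> in_cp mu p"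
proof
  assume "B p \<in> SK lam mu"
  then obtain q where "q \<in> D lam mu" "B p = B q" unfolding SK_def2 by auto
  then show "in_cp lam p \<and> \<not> in_cp mu p" using box_in[OF assms(1)] box_in[OF assms(2)] unfolding D_def by blast
next
  assume "in_cp lam p \<and> \<not> in_cp mu p"
  then show "B p \<in> SK lam mu" unfolding SK_def2 D_def by auto
qed

lemma cbox_rep: "B (x, y) = B (x mod k, y + (x div k)*(n-k))"
proof -
  have "x mod k = x - (x div k) * k" by (simp add: minus_div_mult_eq_mod)
  then show ?thesis using cbox_shift[of x "x div k" y] by simp
qed

lemma SK_Fd: assumes "lam \<in> C" "mu \<in> C" shows "SK lam mu = B ` Fd lam mu"
proof
  show "B ` Fd lam mu \<subseteq> SK lam mu"
    unfolding SK_def2 D_def Fd_def in_cp_def by auto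
  show "SK lam mu \<subseteq> B ` Fd lam mu"
  proof
    fix b assume "b \<in> SK lam mu"
    then obtain x y where b: "b = B (x,y)" "(x,y) \<in> D lam mu" unfolding SK_def2 by auto
    let ?q = "(x mod k, y + (x div k)*(n-k))"
    have "B ?q = B (x,y)" using cbox_rep by simp
    then have "in_cp lam ?q \<and> \<not> in_cp mu ?q"
      using box_in[OF assms(1)] box_in[OF assms(2)] b(2) unfolding D_def by blast
    moreover have "0 \<le> x mod k" "x mod k < k" using k_pos by auto
    ultimately have "?q \<in> Fd lam mu" unfolding Fd_def in_cp_def by auto
    then show "b \<in> B ` Fd lam mu" using b(1) \<open>B ?q = B (x,y)\<close> by (metis image_eqI)
  qed
qed

lemma j_zero: assumes "0 \<le> x" "x < k" "0 \<le> x - j*k" "x - j*k < k" shows "j = 0"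
proof -
  have "j < 1"
  proof (rule ccontr)
    assume "\<not> j < 1" then have "1 * k \<le> j * k" using k_pos mult_right_mono[of 1 j k] by simp
    then show False using assms by linarith
  qed
  moreover have "-1 < j"
  proof (rule ccontr)
    assume "\<not> -1 < j" then have "j * k \<le> (-1) * k" using k_pos mult_right_mono[of j "-1" k] by simp
    then show False using assms by linarith
  qed
  ultimately show ?thesis by linarith
qed

lemma inj_Fd: "inj_on B (Fd lam mu)"
proof
  fix p q assume p: "p \<in> Fd lam mu" and q: "q \<in> Fd lam mu" and e: "B p = B q"
  obtain j where qj: "q = (fst p - j*k, snd p + j*(n-k))" using e cbox_eq_iff by blast
  have "j = 0" apply (rule j_zero[of "fst p"]) using p q qj unfolding Fd_def by auto
  then show "p = q" using qj by (cases p) auto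
qed

lemma Fd_Sigma: "Fd lam mu = Sigma {0..<k} (\<lambda>x. {mu x<..lam x})"
  unfolding Fd_def by auto

lemma finite_Fd: "finite (Fd lam mu)"
  unfolding Fd_Sigma by (rule finite_SigmaI) auto

lemma finite_SK: assumes "lam \<in> C" "mu \<in> C" shows "finite (SK lam mu)"
  using SK_Fd[OF assms] finite_Fd by (metis finite_imageI)

lemma card_SK: assumes "lam \<in> C" "mu \<in> C" "mu \<le> lam"
  shows "int (card (SK lam mu)) = sz lam mu"
proof -
  have "card (SK lam mu) = card (Fd lam mu)" using SK_Fd[OF assms(1,2)] inj_Fd card_image by metis
  also have "\<dots> = (\<Sum>x\<in>{0..<k}. nat (lam x - mu x))" unfolding Fd_Sigma by simp
  finally have "int (card (SK lam mu)) = (\<Sum>x\<in>{0..<k}. int (nat (lam x - mu x)))" by simp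
  also have "\<dots> = sz lam mu" unfolding sz_def
    by (rule sum.cong) (use assms(3) in \<open>auto simp: le_fun_def\<close>)
  finally show ?thesis .
qed

lemma sz_nonneg: "mu \<le> lam \<Longrightarrow> 0 \<le> sz lam mu"
  unfolding sz_def by (rule sum_nonneg) (auto simp: le_fun_def)

lemma in_cp_mono: "mu \<le> lam \<Longrightarrow> in_cp mu p \<Longrightarrow> in_cp lam p"
  unfolding in_cp_def le_fun_def by (meson order_trans)

lemma SK_split: assumes "lam \<in> C" "mu \<in> C" "nu \<in> C" "mu \<le> nu" "nu \<le> lam"
  shows "SK lam mu = SK nu mu \<union> SK lam nu" "SK nu mu \<inter> SK lam nu = {}"
proof -
  have "D lam mu = D nu mu \<union> D lam nu" unfolding D_def using in_cp_mono assms(4,5) by blast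
  then show "SK lam mu = SK nu mu \<union> SK lam nu" unfolding SK_def2 by auto
  show "SK nu mu \<inter> SK lam nu = {}"
  proof (rule ccontr)
    assume "SK nu mu \<inter> SK lam nu \<noteq> {}"
    then obtain p where "B p \<in> SK nu mu" "B p \<in> SK lam nu" unfolding SK_def2 by auto
    then show False using SK_mem assms by blast
  qed
qed

definition Dn :: "(int \<Rightarrow> int) \<Rightarrow> int \<Rightarrow> (int \<Rightarrow> int) set" where "Dn a d = {mu. mu \<in> C \<and> mu \<le> a \<and> sz a mu = d}"
definition Up :: "(int \<Rightarrow> int) \<Rightarrow> int \<Rightarrow> (int \<Rightarrow> int) set" where "Up a d = {lam. lam \<in> C \<and> a \<le> lam \<and> sz lam a = d}"

lemma term_le_sz: assumes "mu \<le> lam" "0 \<le> x" "x < k" shows "lam x - mu x \<le> sz lam mu"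
  unfolding sz_def
  by (rule member_le_sum[where f="\<lambda>x. lam x - mu x"]) (use assms in \<open>auto simp: le_fun_def\<close>)

lemma finite_Dn: "finite (Dn a d)"
proof -
  have "inj_on (\<lambda>mu. restrict mu {0..<k}) (Dn a d)"
  proof
    fix mu nu assume "mu \<in> Dn a d" "nu \<in> Dn a d" "restrict mu {0..<k} = restrict nu {0..<k}"
    then show "mu = nu" unfolding Dn_def
      by (intro C_eq) (auto dest!: fun_cong[where x="_::int"] simp: restrict_def split: if_splits)
  qed
  moreover have "(\<lambda>mu. restrict mu {0..<k}) ` Dn a d \<subseteq> PiE {0..<k} (\<lambda>x. {a x - d..a x})"
  proof
    fix g assume "g \<in> (\<lambda>mu. restrict mu {0..<k}) ` Dn a d"
    then obtain mu where mu: "mu \<in> Dn a d" "g = restrict mu {0..<k}" by auto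
    have "\<forall>x\<in>{0..<k}. mu x \<in> {a x - d..a x}"
    proof
      fix x assume x: "x \<in> {0..<k}"
      then have "a x - mu x \<le> sz a mu" using term_le_sz mu(1) unfolding Dn_def by auto
      then show "mu x \<in> {a x - d..a x}" using mu(1) unfolding Dn_def le_fun_def by auto
    qed
    then show "g \<in> PiE {0..<k} (\<lambda>x. {a x - d..a x})" using mu(2) by auto
  qed
  ultimately show ?thesis using finite_PiE[of "{0..<k}" "\<lambda>x. {a x - d..a x}"]
    by (meson finite_atLeastAtMost_int finite_atLeastLessThan_int finite_imageD finite_subset)
qed

lemma finite_Up: "finite (Up a d)"
proof -
  have "inj_on (\<lambda>mu. restrict mu {0..<k}) (Up a d)"
  proof
    fix mu nu assume "mu \<in> Up a d" "nu \<in> Up a d" "restrict mu {0..<k} = restrict nu {0..<k}"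
    then show "mu = nu" unfolding Up_def
      by (intro C_eq) (auto dest!: fun_cong[where x="_::int"] simp: restrict_def split: if_splits)
  qed
  moreover have "(\<lambda>mu. restrict mu {0..<k}) ` Up a d \<subseteq> PiE {0..<k} (\<lambda>x. {a x..a x + d})"
  proof
    fix g assume "g \<in> (\<lambda>mu. restrict mu {0..<k}) ` Up a d"
    then obtain mu where mu: "mu \<in> Up a d" "g = restrict mu {0..<k}" by auto
    have "\<forall>x\<in>{0..<k}. mu x \<in> {a x..a x + d}"
    proof
      fix x assume x: "x \<in> {0..<k}"
      then have "mu x - a x \<le> sz mu a" using term_le_sz mu(1) unfolding Up_def by auto
      then show "mu x \<in> {a x..a x + d}" using mu(1) unfolding Up_def le_fun_def by auto
    qed
    then show "g \<in> PiE {0..<k} (\<lambda>x. {a x..a x + d})" using mu(2) by auto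
  qed
  ultimately show ?thesis using finite_PiE[of "{0..<k}" "\<lambda>x. {a x..a x + d}"]
    by (meson finite_atLeastAtMost_int finite_atLeastLessThan_int finite_imageD finite_subset)
qed


lemma sum_shift1:
  fixes g :: "int \<Rightarrow> int"
  assumes "\<And>x. g (x + k) = g x - c"
  shows "(\<Sum>x\<in>{0..<k}. g (x + 1)) = (\<Sum>x\<in>{0..<k}. g x) - c"
proof -
  have "(\<Sum>x\<in>{0..<k}. g (x + 1)) = sum g ((\<lambda>x. x + 1) ` {0..<k})"
    by (rule sum.reindex[symmetric, unfolded comp_def]) (auto simp: inj_on_def)
  also have "(\<lambda>x. x + 1) ` {0..<k} = {1..<k+1}" by simp
  finally have e1: "(\<Sum>x\<in>{0..<k}. g (x + 1)) = sum g {1..<k+1}" .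
  have "{0..<k+1} = insert 0 {1..<k+1}" using k_pos by auto
  then have e2: "sum g {0..<k+1} = g 0 + sum g {1..<k+1}" by simp
  have "{0..<k+1} = insert k {0..<k}" using k_pos by auto
  then have e3: "sum g {0..<k+1} = g k + sum g {0..<k}" by simp
  have "g k = g 0 - c" using assms[of 0] by simp
  then show ?thesis using e1 e2 e3 by linarith
qed

lemma sum_shiftm1:
  fixes g :: "int \<Rightarrow> int"
  assumes "\<And>x. g (x + k) = g x - c"
  shows "(\<Sum>x\<in>{0..<k}. g (x - 1)) = (\<Sum>x\<in>{0..<k}. g x) + c"
proof -
  let ?h = "\<lambda>x. g (x - 1)"
  have "\<And>x. ?h (x + k) = ?h x - c" using assms by (metis add_diff_eq diff_add_eq)
  from sum_shift1[of ?h c, OF this] show ?thesis by simp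
qed

lemma C_per_gen: "lam \<in> C \<Longrightarrow> lam (x + k) = lam x - (n - k)"
  by (rule C_per)

definition strip :: "(int \<Rightarrow> int) \<Rightarrow> (int \<Rightarrow> int) \<Rightarrow> bool" where
  "strip lam nu \<longleftrightarrow> nu \<le> lam \<and> (\<forall>x. lam (x + 1) \<le> nu x)"

definition V :: "nat \<Rightarrow> (int \<Rightarrow> int) \<Rightarrow> (int \<Rightarrow> int) \<Rightarrow> nat" where
  "V p lam nu = (if lam \<in> C \<and> nu \<in> C \<and> strip lam nu \<and> sz lam nu = int p then 1 else 0)"

lemma V_le1: "V p lam nu \<le> 1" by (simp add: V_def)

lemma V_supp: "V p a nu \<noteq> 0 \<Longrightarrow> nu \<in> Dn a (int p) \<and> a \<in> Up nu (int p)"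
  by (simp add: V_def Dn_def Up_def strip_def split: if_splits)

lemma sumC: assumes "lam \<in> C" shows "\<And>x. lam (x + k) = lam x - (n - k)"
  using C_per[OF assms] by blast

lemma commute1:
  "fsum (\<lambda>mu. V p a mu * V q b mu) = fsum (\<lambda>l. V p l b * V q l a)"
proof (cases "a \<in> C \<and> b \<in> C")
  case False
  then have "\<And>mu. V p a mu * V q b mu = 0" "\<And>l. V p l b * V q l a = 0" by (auto simp: V_def)
  then show ?thesis by (simp add: fsum_def)
next
  case True
  then have aC: "a \<in> C" and bC: "b \<in> C" by auto
  define M where "M x = max (a x) (b x)" for x
  define m where "m x = min (a x) (b x)" for x
  have Mp: "M (x + k) = M x - (n - k)" for x unfolding M_def using C_per[OF aC] C_per[OF bC] by simp
  have mp: "m (x + k) = m x - (n - k)" for x unfolding m_def using C_per[OF aC] C_per[OF bC] by simp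
  have sM: "(\<Sum>x\<in>{0..<k}. M x) + (\<Sum>x\<in>{0..<k}. m x) = (\<Sum>x\<in>{0..<k}. a x) + (\<Sum>x\<in>{0..<k}. b x)"
    unfolding sum.distrib[symmetric] by (rule sum.cong) (auto simp: M_def m_def)
  define A where "A = {mu. mu \<in> C \<and> strip a mu \<and> strip b mu \<and> sz a mu = int p \<and> sz b mu = int q}"
  define Bs where "Bs = {l. l \<in> C \<and> strip l b \<and> strip l a \<and> sz l b = int p \<and> sz l a = int q}"
  have eA: "{mu. V p a mu * V q b mu \<noteq> 0} = A" unfolding A_def V_def using True by auto
  have eB: "{l. V p l b * V q l a \<noteq> 0} = Bs" unfolding Bs_def V_def using True by auto
  define phi where "phi mu = (\<lambda>x. M x + m (x - 1) - mu (x - 1))" for mu :: "int \<Rightarrow> int"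
  define psi where "psi l = (\<lambda>x. M (x + 1) + m x - l (x + 1))" for l :: "int \<Rightarrow> int"
  have sumA: "(\<Sum>x\<in>{0..<k}. a x) = sz a mu + (\<Sum>x\<in>{0..<k}. mu x)" for mu
    unfolding sz_def sum_subtractf by simp
  have sumB: "(\<Sum>x\<in>{0..<k}. b x) = sz b mu + (\<Sum>x\<in>{0..<k}. mu x)" for mu
    unfolding sz_def sum_subtractf by simp
  have sumL: "(\<Sum>x\<in>{0..<k}. l x) = sz l c + (\<Sum>x\<in>{0..<k}. c x)" for l c
    unfolding sz_def sum_subtractf by simp
  have bij: "bij_betw phi A Bs"
  proof (rule bij_betw_byWitness[where f'=psi])
    show "\<forall>mu\<in>A. psi (phi mu) = mu" unfolding psi_def phi_def by auto
    show "\<forall>l\<in>Bs. phi (psi l) = l" unfolding psi_def phi_def by auto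
    show "phi ` A \<subseteq> Bs"
    proof
      fix l assume "l \<in> phi ` A"
      then obtain mu where mu: "mu \<in> A" "l = phi mu" by auto
      have muC: "mu \<in> C" and sa: "strip a mu" and sb: "strip b mu" and za: "sz a mu = int p"
        and zb: "sz b mu = int q" using mu(1) unfolding A_def by auto
      have lo: "mu x \<le> m x" for x using sa sb unfolding strip_def m_def le_fun_def by auto
      have hi: "M (x + 1) \<le> mu x" for x using sa sb unfolding strip_def M_def by auto
      have l1: "l (x + 1) = M (x + 1) + m x - mu x" for x unfolding mu(2) phi_def by simp
      have lM: "M x \<le> l x" for x using lo[of "x - 1"] unfolding mu(2) phi_def by simp
      have lm: "l (x + 1) \<le> m x" for x using l1 hi by simp
      have lC: "l \<in> C" unfolding cylpar_def
      proof safe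
        fix x show "l (x + 1) \<le> l x" using lm[of x] lM[of x] unfolding M_def m_def by linarith
      next
        fix x
        have "l (x + k) = M (x + k) + m (x - 1 + k) - mu (x - 1 + k)" unfolding mu(2) phi_def
          by (simp add: algebra_simps)
        also have "\<dots> = l x - (n - k)" using Mp mp C_per[OF muC] unfolding mu(2) phi_def by simp
        finally show "l x = l (x + k) + (n - k)" by simp
      qed
      have "(\<Sum>x\<in>{0..<k}. l x) = (\<Sum>x\<in>{0..<k}. (\<lambda>y. M (y + 1) + m y - mu y) (x - 1))"
        unfolding mu(2) phi_def by simp
      also have "\<dots> = (\<Sum>x\<in>{0..<k}. M (x + 1) + m x - mu x) + (n - k)"
      proof (rule sum_shiftm1)
        fix x
        have "M (x + k + 1) = M (x + 1) - (n - k)" using Mp[of "x+1"] by (simp add: add_ac)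
        then show "M (x + k + 1) + m (x + k) - mu (x + k) = M (x + 1) + m x - mu x - (n - k)"
          using mp[of x] C_per[OF muC, of x] by linarith
      qed
      also have "\<dots> = (\<Sum>x\<in>{0..<k}. M (x + 1)) + (\<Sum>x\<in>{0..<k}. m x) - (\<Sum>x\<in>{0..<k}. mu x) + (n - k)"
        by (simp add: sum.distrib sum_subtractf)
      also have "(\<Sum>x\<in>{0..<k}. M (x + 1)) = (\<Sum>x\<in>{0..<k}. M x) - (n - k)"
        by (rule sum_shift1) (use Mp in simp)
      finally have sl: "(\<Sum>x\<in>{0..<k}. l x) = (\<Sum>x\<in>{0..<k}. a x) + (\<Sum>x\<in>{0..<k}. b x) - (\<Sum>x\<in>{0..<k}. mu x)"
        using sM by simp
      show "l \<in> Bs" unfolding Bs_def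
      proof (intro CollectI conjI lC)
        show "strip l b" unfolding strip_def le_fun_def using lM lm unfolding M_def m_def
          by (metis max.bounded_iff min.bounded_iff)
        show "strip l a" unfolding strip_def le_fun_def using lM lm unfolding M_def m_def
          by (metis max.bounded_iff min.bounded_iff)
        show "sz l b = int p" using sl sumL[of l b] sumA[of mu] za by linarith
        show "sz l a = int q" using sl sumL[of l a] sumB[of mu] zb by linarith
      qed
    qed
    show "psi ` Bs \<subseteq> A"
    proof
      fix mu assume "mu \<in> psi ` Bs"
      then obtain l where l: "l \<in> Bs" "mu = psi l" by auto
      have lC: "l \<in> C" and sa: "strip l a" and sb: "strip l b" and zb: "sz l b = int p"
        and za: "sz l a = int q" using l(1) unfolding Bs_def by auto
      have lo: "M x \<le> l x" for x using sa sb unfolding strip_def M_def le_fun_def by auto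
      have hi: "l (x + 1) \<le> m x" for x using sa sb unfolding strip_def m_def by auto
      have mm: "mu x \<le> m x" for x using lo[of "x + 1"] unfolding l(2) psi_def by simp
      have mM: "M (x + 1) \<le> mu x" for x using hi[of x] unfolding l(2) psi_def by simp
      have muC: "mu \<in> C" unfolding cylpar_def
      proof safe
        fix x show "mu (x + 1) \<le> mu x" using mm[of "x + 1"] mM[of x] unfolding M_def m_def by linarith
      next
        fix x
        have "mu (x + k) = M (x + 1 + k) + m (x + k) - l (x + 1 + k)" unfolding l(2) psi_def
          by (simp add: algebra_simps)
        also have "\<dots> = mu x - (n - k)" using Mp mp C_per[OF lC] unfolding l(2) psi_def by simp
        finally show "mu x = mu (x + k) + (n - k)" by simp
      qed
      have "(\<Sum>x\<in>{0..<k}. mu x) = (\<Sum>x\<in>{0..<k}. M (x + 1)) + (\<Sum>x\<in>{0..<k}. m x) - (\<Sum>x\<in>{0..<k}. l (x + 1))"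
        unfolding l(2) psi_def by (simp add: sum.distrib sum_subtractf)
      also have "(\<Sum>x\<in>{0..<k}. M (x + 1)) = (\<Sum>x\<in>{0..<k}. M x) - (n - k)"
        by (rule sum_shift1) (use Mp in simp)
      also have "(\<Sum>x\<in>{0..<k}. l (x + 1)) = (\<Sum>x\<in>{0..<k}. l x) - (n - k)"
        by (rule sum_shift1) (use C_per[OF lC] in simp)
      finally have sm: "(\<Sum>x\<in>{0..<k}. mu x) = (\<Sum>x\<in>{0..<k}. a x) + (\<Sum>x\<in>{0..<k}. b x) - (\<Sum>x\<in>{0..<k}. l x)"
        using sM by simp
      show "mu \<in> A" unfolding A_def
      proof (intro CollectI conjI muC)
        show "strip a mu" unfolding strip_def le_fun_def using mm mM unfolding M_def m_def
          by (metis max.bounded_iff min.bounded_iff)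
        show "strip b mu" unfolding strip_def le_fun_def using mm mM unfolding M_def m_def
          by (metis max.bounded_iff min.bounded_iff)
        show "sz a mu = int p" using sm sumL[of l b] sumA[of mu] zb by linarith
        show "sz b mu = int q" using sm sumL[of l a] sumB[of mu] za by linarith
      qed
    qed
  qed
  have "fsum (\<lambda>mu. V p a mu * V q b mu) = card {mu. V p a mu * V q b mu \<noteq> 0}"
    by (rule fsum_01) (simp add: V_def)
  also have "\<dots> = card A" by (simp only: eA)
  also have "\<dots> = card Bs" using bij by (rule bij_betw_same_card)
  also have "\<dots> = card {l. V p l b * V q l a \<noteq> 0}" by (simp only: eB)
  also have "\<dots> = fsum (\<lambda>l. V p l b * V q l a)"
    by (rule fsum_01[symmetric]) (simp add: V_def)
  finally show ?thesis .
qed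


definition T :: "(int \<Rightarrow> int) \<Rightarrow> (int \<Rightarrow> int) \<Rightarrow> ('a::linorder \<Rightarrow> nat) \<Rightarrow> ((int \<times> int) set \<Rightarrow> 'a) set" where
  "T lam mu e = {R \<in> ssct k n lam mu. tab_wt k n lam mu R = e}"

lemma cyl_schur_T: "cyl_schur k n lam mu e = card (T lam mu e)"
  by (simp add: cyl_schur_def T_def)

lemma wt_eq: "tab_wt k n lam mu R a = card {b \<in> SK lam mu. R b = a}"
  by (simp add: tab_wt_def)

lemma ssct_ext: "R \<in> ssct k n lam mu \<Longrightarrow> R \<in> extensional (SK lam mu)"
  by (simp add: ssct_def)

lemma ssct_col: "R \<in> ssct k n lam mu \<Longrightarrow> mu x < y1 \<Longrightarrow> y1 < y2 \<Longrightarrow> y2 \<le> lam x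
   \<Longrightarrow> R (B (x, y1)) \<le> R (B (x, y2))"
  unfolding ssct_def in_cp_def by auto

lemma ssct_row: "R \<in> ssct k n lam mu \<Longrightarrow> mu x1 < y \<Longrightarrow> y \<le> lam x1 \<Longrightarrow> mu x2 < y \<Longrightarrow> y \<le> lam x2
   \<Longrightarrow> x1 < x2 \<Longrightarrow> R (B (x1, y)) < R (B (x2, y))"
  unfolding ssct_def in_cp_def by auto

lemma ssctI:
  assumes "R \<in> extensional (SK lam mu)"
    and "\<And>x y1 y2. mu x < y1 \<Longrightarrow> y1 < y2 \<Longrightarrow> y2 \<le> lam x \<Longrightarrow> R (B (x, y1)) \<le> R (B (x, y2))"
    and "\<And>x1 x2 y. mu x1 < y \<Longrightarrow> y \<le> lam x1 \<Longrightarrow> mu x2 < y \<Longrightarrow> y \<le> lam x2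
           \<Longrightarrow> x1 < x2 \<Longrightarrow> R (B (x1, y)) < R (B (x2, y))"
  shows "R \<in> ssct k n lam mu"
  unfolding ssct_def in_cp_def using assms by auto

lemma SK_pt: assumes "lam \<in> C" "mu \<in> C" shows "B (x, y) \<in> SK lam mu \<longleftrightarrow> mu x < y \<and> y \<le> lam x"
  using SK_mem[OF assms, of "(x,y)"] unfolding in_cp_def by auto

lemma SK_cases: assumes "b \<in> SK lam mu" obtains x y where "b = B (x,y)" "mu x < y" "y \<le> lam x"
  using assms unfolding SK_def2 D_def in_cp_def by auto

lemma T_val: assumes "lam \<in> C" "mu \<in> C" "R \<in> T lam mu e" "b \<in> SK lam mu"
  shows "e (R b) \<noteq> 0"
proof -
  have "e (R b) = card {b' \<in> SK lam mu. R b' = R b}" using assms(3) unfolding T_def wt_eq by auto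
  moreover have "finite {b' \<in> SK lam mu. R b' = R b}" using finite_SK[OF assms(1,2)] by simp
  moreover have "b \<in> {b' \<in> SK lam mu. R b' = R b}" using assms(4) by simp
  ultimately show ?thesis by (metis card_0_eq empty_iff)
qed

lemma T_supp: assumes "lam \<in> C" "mu \<in> C" "R \<in> T lam mu e"
  shows "{a. e a \<noteq> 0} = R ` SK lam mu"
proof
  show "R ` SK lam mu \<subseteq> {a. e a \<noteq> 0}" using T_val[OF assms] by auto
  show "{a. e a \<noteq> 0} \<subseteq> R ` SK lam mu"
  proof
    fix a assume "a \<in> {a. e a \<noteq> 0}"
    then have "card {b' \<in> SK lam mu. R b' = a} \<noteq> 0" using assms(3) unfolding T_def wt_eq by auto
    then obtain b where "b \<in> SK lam mu" "R b = a" by (metis (mono_tags, lifting) Collect_empty_eq card.empty)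
    then show "a \<in> R ` SK lam mu" by auto
  qed
qed

definition esz :: "('a \<Rightarrow> nat) \<Rightarrow> nat" where "esz e = (\<Sum>a | e a \<noteq> 0. e a)"

lemma T_card: assumes "lam \<in> C" "mu \<in> C" "R \<in> T lam mu e"
  shows "card (SK lam mu) = esz e" "finite {a. e a \<noteq> 0}"
proof -
  have fin: "finite (SK lam mu)" using finite_SK[OF assms(1,2)] .
  have "card (SK lam mu) = (\<Sum>b\<in>SK lam mu. 1)" by simp
  also have "\<dots> = (\<Sum>a\<in>R ` SK lam mu. \<Sum>b\<in>{b \<in> SK lam mu. R b = a}. 1)"
    by (rule sum.image_gen[OF fin])
  also have "\<dots> = (\<Sum>a\<in>R ` SK lam mu. e a)"
    by (rule sum.cong) (use assms(3) in \<open>auto simp: T_def wt_eq\<close>)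
  also have "\<dots> = esz e" unfolding esz_def T_supp[OF assms] ..
  finally show "card (SK lam mu) = esz e" .
  show "finite {a. e a \<noteq> 0}" unfolding T_supp[OF assms] using fin by simp
qed

lemma T_finite: assumes "lam \<in> C" "mu \<in> C" "finite {a. e a \<noteq> 0}" shows "finite (T lam mu e)"
proof -
  have "T lam mu e \<subseteq> PiE (SK lam mu) (\<lambda>_. {a. e a \<noteq> 0})"
  proof
    fix R assume R: "R \<in> T lam mu e"
    then have "R \<in> extensional (SK lam mu)" unfolding T_def by (auto dest: ssct_ext)
    then show "R \<in> PiE (SK lam mu) (\<lambda>_. {a. e a \<noteq> 0})" using T_val[OF assms(1,2) R] by (auto simp: PiE_def)
  qed
  then show ?thesis using finite_PiE[OF finite_SK[OF assms(1,2)], of "\<lambda>_. {a. e a \<noteq> 0}"] assms(3)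
    by (metis finite_subset)
qed

definition S :: "('a::linorder \<Rightarrow> nat) \<Rightarrow> (int \<Rightarrow> int) \<Rightarrow> (int \<Rightarrow> int) \<Rightarrow> nat" where
  "S e lam mu = (if lam \<in> C \<and> mu \<in> C \<and> mu \<le> lam then cyl_schur k n lam mu e else 0)"

lemma S_supp: assumes "S e a mu \<noteq> 0"
  shows "mu \<in> Dn a (int (esz e)) \<and> a \<in> Up mu (int (esz e)) \<and> finite {x. e x \<noteq> 0}"
proof -
  have h: "a \<in> C" "mu \<in> C" "mu \<le> a" "card (T a mu e) \<noteq> 0" using assms by (auto simp: S_def cyl_schur_T split: if_splits)
  then obtain R where R: "R \<in> T a mu e" by (metis card.empty ex_in_conv)
  have "sz a mu = int (esz e)" using card_SK[OF h(1,2,3)] T_card(1)[OF h(1,2) R] by simp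
  then show ?thesis using h T_card(2)[OF h(1,2) R] unfolding Dn_def Up_def by auto
qed

lemma S_zero: "S (\<lambda>_::'a::linorder. 0) lam mu = (if lam \<in> C \<and> mu = lam then 1 else 0)"
proof (cases "lam \<in> C \<and> mu \<in> C \<and> mu \<le> lam")
  case False
  then show ?thesis by (auto simp: S_def)
next
  case True
  then have lC: "lam \<in> C" and muC: "mu \<in> C" and ml: "mu \<le> lam" by auto
  show ?thesis
  proof (cases "mu = lam")
    case True
    have sk: "SK lam lam = {}" unfolding SK_def2 D_def by auto
    have "T lam lam (\<lambda>_::'a. 0::nat) = {\<lambda>_. undefined}"
    proof
      show "T lam lam (\<lambda>_::'a. 0::nat) \<subseteq> {\<lambda>_. undefined}"
        unfolding T_def using ssct_ext[of _ lam lam] sk by (auto simp: extensional_def)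
      show "{\<lambda>_. undefined} \<subseteq> T lam lam (\<lambda>_::'a. 0::nat)"
        unfolding T_def using sk by (auto intro!: ssctI simp: wt_eq extensional_def SK_pt[OF lC lC])
    qed
    then show ?thesis using True lC by (simp add: S_def cyl_schur_T)
  next
    case False
    have "T lam mu (\<lambda>_::'a. 0::nat) = {}"
    proof (rule ccontr)
      assume "T lam mu (\<lambda>_::'a. 0::nat) \<noteq> {}"
      then obtain R where R: "R \<in> T lam mu (\<lambda>_::'a. 0::nat)" by auto
      have "card (SK lam mu) = 0" using T_card(1)[OF lC muC R] by (simp add: esz_def)
      then have "sz lam mu = 0" using card_SK[OF lC muC ml] by simp
      then have "lam x = mu x" if "0 \<le> x" "x < k" for x
        using term_le_sz[OF ml that] ml by (auto simp: le_fun_def intro: antisym)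
      then have "lam = mu" using C_eq[OF lC muC] by blast
      then show False using False by simp
    qed
    then show ?thesis using False by (simp add: S_def cyl_schur_T)
  qed
qed


definition nuR :: "(int \<Rightarrow> int) \<Rightarrow> (int \<Rightarrow> int) \<Rightarrow> 'a::linorder \<Rightarrow> ((int \<times> int) set \<Rightarrow> 'a) \<Rightarrow> int \<Rightarrow> int" where
  "nuR lam mu m R x = Max (insert (mu x) {y. mu x < y \<and> y \<le> lam x \<and> R (B (x,y)) \<noteq> m})"

lemma char:
  assumes R: "R \<in> ssct k n lam mu" and ml: "mu \<le> lam" and lC: "lam \<in> C" and muC: "mu \<in> C"
    and vals: "\<forall>b\<in>SK lam mu. R b \<le> m"
  shows "mu x \<le> nuR lam mu m R x \<and> nuR lam mu m R x \<le> lam x \<and>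
     (\<forall>y. mu x < y \<and> y \<le> lam x \<longrightarrow> (R (B (x,y)) \<noteq> m \<longleftrightarrow> y \<le> nuR lam mu m R x))"
proof -
  define Y where "Y = {y. mu x < y \<and> y \<le> lam x \<and> R (B (x,y)) \<noteq> m}"
  have finY: "finite (insert (mu x) Y)"
    by (rule finite_insert[THEN iffD2], rule finite_subset[of _ "{mu x<..lam x}"]) (auto simp: Y_def)
  have nu: "nuR lam mu m R x = Max (insert (mu x) Y)" unfolding nuR_def Y_def ..
  have mlx: "mu x \<le> lam x" using ml by (simp add: le_fun_def)
  have g1: "mu x \<le> nuR lam mu m R x" unfolding nu using finY by simp
  have g2: "nuR lam mu m R x \<le> lam x" unfolding nu using finY mlx by (auto simp: Y_def)
  have g3: "R (B (x,y)) \<noteq> m \<longleftrightarrow> y \<le> nuR lam mu m R x" if y: "mu x < y" "y \<le> lam x" for y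
  proof
    assume "R (B (x,y)) \<noteq> m"
    then have "y \<in> insert (mu x) Y" using y by (simp add: Y_def)
    then show "y \<le> nuR lam mu m R x" unfolding nu using finY by simp
  next
    assume yle: "y \<le> nuR lam mu m R x"
    have "Max (insert (mu x) Y) \<in> insert (mu x) Y" using finY by (rule Max_in) simp
    moreover have "Max (insert (mu x) Y) \<noteq> mu x" using yle y(1) nu by linarith
    ultimately have "Max (insert (mu x) Y) \<in> Y" by simp
    then obtain y' where y': "y' = nuR lam mu m R x" "mu x < y'" "y' \<le> lam x" "R (B (x,y')) \<noteq> m"
      unfolding nu Y_def by auto
    have "R (B (x,y')) \<le> m" using vals SK_pt[OF lC muC] y' by blast
    then have lt: "R (B (x,y')) < m" using y'(4) by simp
    show "R (B (x,y)) \<noteq> m"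
    proof (cases "y = y'")
      case True then show ?thesis using y' by simp
    next
      case False
      then have "y < y'" using yle y' by simp
      then have "R (B (x,y)) \<le> R (B (x,y'))" using ssct_col[OF R y(1) _ y'(3)] by simp
      then show ?thesis using lt by simp
    qed
  qed
  show ?thesis using g1 g2 g3 by blast
qed

lemma fwd:
  assumes R: "R \<in> ssct k n lam mu" and ml: "mu \<le> lam" and lC: "lam \<in> C" and muC: "mu \<in> C"
    and vals: "\<forall>b\<in>SK lam mu. R b \<le> m"
  defines "nu \<equiv> nuR lam mu m R"
  shows "nu \<in> C" "mu \<le> nu" "strip lam nu" "{b \<in> SK lam mu. R b = m} = SK lam nu"
    "\<forall>b\<in>SK nu mu. R b \<noteq> m"
    "\<And>a. a \<noteq> m \<Longrightarrow> {b \<in> SK nu mu. R b = a} = {b \<in> SK lam mu. R b = a}"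
    "restrict R (SK nu mu) \<in> ssct k n nu mu"
proof -
  have ch: "mu x \<le> nu x" "nu x \<le> lam x"
    "\<And>y. mu x < y \<Longrightarrow> y \<le> lam x \<Longrightarrow> R (B (x,y)) \<noteq> m \<longleftrightarrow> y \<le> nu x" for x
    using char[OF R ml lC muC vals, of x] unfolding nu_def by blast+
  have valpt: "R (B (x,y)) \<le> m" if "mu x < y" "y \<le> lam x" for x y
    using vals SK_pt[OF lC muC] that by blast
  have dec: "nu (x + 1) \<le> nu x" for x
  proof (rule ccontr)
    assume a: "\<not> nu (x + 1) \<le> nu x"
    define y where "y = nu (x + 1)"
    have m1: "mu (x + 1) \<le> mu x" "lam (x + 1) \<le> lam x" using C_dec lC muC by auto
    have p1: "mu (x + 1) < y" using a ch(1)[of x] m1 unfolding y_def by linarith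
    have p2: "y \<le> lam (x + 1)" using ch(2) unfolding y_def by simp
    have r1: "R (B (x + 1, y)) \<noteq> m" using ch(3)[OF p1 p2] unfolding y_def by simp
    have q1: "mu x < y" "y \<le> lam x" using a ch(1)[of x] p2 m1 unfolding y_def by linarith+
    have r2: "R (B (x, y)) = m" using ch(3)[OF q1] a unfolding y_def by simp
    have "R (B (x, y)) < R (B (x + 1, y))" using ssct_row[OF R q1 p1 p2] by simp
    then show False using r2 valpt[OF p1 p2] by simp
  qed
  have per: "nu (x + k) = nu x - (n - k)" for x
  proof (rule threshold_unique[where lo = "mu (x + k)" and hi = "lam (x + k)"])
    have e1: "mu (x + k) = mu x - (n - k)" "lam (x + k) = lam x - (n - k)" using C_per lC muC by auto
    show "mu (x + k) \<le> nu (x + k)" "nu (x + k) \<le> lam (x + k)" using ch by auto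
    show "mu (x + k) \<le> nu x - (n - k)" "nu x - (n - k) \<le> lam (x + k)" using ch e1 by auto
    fix y assume y: "mu (x + k) < y" "y \<le> lam (x + k)"
    have y2: "mu x < y + (n - k)" "y + (n - k) \<le> lam x" using y e1 by auto
    have "y \<le> nu (x + k) \<longleftrightarrow> R (B (x + k, y)) \<noteq> m" using ch(3)[OF y] by simp
    also have "\<dots> \<longleftrightarrow> R (B (x, y + (n - k))) \<noteq> m" using cbox_shift1 by simp
    also have "\<dots> \<longleftrightarrow> y + (n - k) \<le> nu x" using ch(3)[OF y2] .
    finally show "y \<le> nu (x + k) \<longleftrightarrow> y \<le> nu x - (n - k)" by linarith
  qed
  show nuC: "nu \<in> C" unfolding cylpar_def using dec per by auto
  show "mu \<le> nu" using ch by (simp add: le_fun_def)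
  show "strip lam nu" unfolding strip_def
  proof (intro conjI allI)
    show "nu \<le> lam" using ch by (simp add: le_fun_def)
    fix x show "lam (x + 1) \<le> nu x"
    proof (rule ccontr)
      assume a: "\<not> lam (x + 1) \<le> nu x"
      define y where "y = lam (x + 1)"
      have m1: "mu (x + 1) \<le> mu x" "lam (x + 1) \<le> lam x" using C_dec lC muC by auto
      have q1: "mu x < y" "y \<le> lam x" using a ch(1)[of x] m1 unfolding y_def by linarith+
      have r2: "R (B (x, y)) = m" using ch(3)[OF q1] a unfolding y_def by simp
      have p1: "mu (x + 1) < y" "y \<le> lam (x + 1)" using q1 m1 unfolding y_def by linarith+
      have "R (B (x, y)) < R (B (x + 1, y))" using ssct_row[OF R q1 p1] by simp
      then show False using r2 valpt[OF p1] by simp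
    qed
  qed
  show "{b \<in> SK lam mu. R b = m} = SK lam nu"
  proof
    show "{b \<in> SK lam mu. R b = m} \<subseteq> SK lam nu"
    proof
      fix b assume b: "b \<in> {b \<in> SK lam mu. R b = m}"
      then obtain x y where xy: "b = B (x,y)" "mu x < y" "y \<le> lam x" by (auto elim: SK_cases)
      then have "\<not> y \<le> nu x" using ch(3)[OF xy(2,3)] b by simp
      then show "b \<in> SK lam nu" using xy SK_pt[OF lC nuC] by simp
    qed
    show "SK lam nu \<subseteq> {b \<in> SK lam mu. R b = m}"
    proof
      fix b assume b: "b \<in> SK lam nu"
      then obtain x y where xy: "b = B (x,y)" "nu x < y" "y \<le> lam x" by (auto elim: SK_cases)
      have "mu x < y" using ch(1)[of x] xy by simp
      then show "b \<in> {b \<in> SK lam mu. R b = m}" using xy ch(3)[of x y] SK_pt[OF lC muC] by auto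
    qed
  qed
  show "\<forall>b\<in>SK nu mu. R b \<noteq> m"
  proof
    fix b assume "b \<in> SK nu mu"
    then obtain x y where xy: "b = B (x,y)" "mu x < y" "y \<le> nu x" by (auto elim: SK_cases)
    then show "R b \<noteq> m" using ch(2,3)[of x] by force
  qed
  have sub: "SK nu mu \<subseteq> SK lam mu"
    using SK_split(1)[OF lC muC nuC \<open>mu \<le> nu\<close>] \<open>strip lam nu\<close> unfolding strip_def by blast
  show "{b \<in> SK nu mu. R b = a} = {b \<in> SK lam mu. R b = a}" if "a \<noteq> m" for a
  proof
    show "{b \<in> SK nu mu. R b = a} \<subseteq> {b \<in> SK lam mu. R b = a}" using sub by blast
    show "{b \<in> SK lam mu. R b = a} \<subseteq> {b \<in> SK nu mu. R b = a}"
    proof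
      fix b assume b: "b \<in> {b \<in> SK lam mu. R b = a}"
      then obtain x y where xy: "b = B (x,y)" "mu x < y" "y \<le> lam x" by (auto elim: SK_cases)
      then have "y \<le> nu x" using ch(3)[OF xy(2,3)] b that by simp
      then show "b \<in> {b \<in> SK nu mu. R b = a}" using xy b SK_pt[OF nuC muC] by simp
    qed
  qed
  show "restrict R (SK nu mu) \<in> ssct k n nu mu"
  proof (rule ssctI)
    show "restrict R (SK nu mu) \<in> extensional (SK nu mu)" by simp
    fix x y1 y2 assume a: "mu x < y1" "y1 < y2" "y2 \<le> nu x"
    then have "B (x,y1) \<in> SK nu mu" "B (x,y2) \<in> SK nu mu" using SK_pt[OF nuC muC] by auto
    moreover have "R (B (x, y1)) \<le> R (B (x, y2))" using ssct_col[OF R a(1,2)] a(3) ch(2)[of x] by simp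
    ultimately show "restrict R (SK nu mu) (B (x, y1)) \<le> restrict R (SK nu mu) (B (x, y2))" by simp
  next
    fix x1 x2 y assume a: "mu x1 < y" "y \<le> nu x1" "mu x2 < y" "y \<le> nu x2" "x1 < x2"
    then have "B (x1,y) \<in> SK nu mu" "B (x2,y) \<in> SK nu mu" using SK_pt[OF nuC muC] by auto
    moreover have "R (B (x1, y)) < R (B (x2, y))"
      using ssct_row[OF R a(1) _ a(3) _ a(5)] a ch(2)[of x1] ch(2)[of x2] by simp
    ultimately show "restrict R (SK nu mu) (B (x1, y)) < restrict R (SK nu mu) (B (x2, y))" by simp
  qed
qed

definition glue :: "(int \<Rightarrow> int) \<Rightarrow> (int \<Rightarrow> int) \<Rightarrow> (int \<Rightarrow> int) \<Rightarrow> 'a \<Rightarrow> ((int \<times> int) set \<Rightarrow> 'a) \<Rightarrow> (int \<times> int) set \<Rightarrow> 'a" where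
  "glue nu lam mu m R' = (\<lambda>b. if b \<in> SK nu mu then R' b else if b \<in> SK lam nu then m else undefined)"

lemma bwd:
  fixes m :: "'a::linorder"
  assumes lC: "lam \<in> C" and muC: "mu \<in> C" and nuC: "nu \<in> C" and mn: "mu \<le> nu" and st: "strip lam nu"
    and R': "R' \<in> ssct k n nu mu" and vals: "\<forall>b\<in>SK nu mu. R' b < m"
  defines "R \<equiv> glue nu lam mu m R'"
  shows "R \<in> ssct k n lam mu" "{b \<in> SK lam mu. R b = m} = SK lam nu"
    "\<And>a. a \<noteq> m \<Longrightarrow> {b \<in> SK lam mu. R b = a} = {b \<in> SK nu mu. R' b = a}"
    "\<forall>b\<in>SK lam mu. R b \<le> m"
    "\<And>x y. mu x < y \<Longrightarrow> y \<le> lam x \<Longrightarrow> R (B (x,y)) \<noteq> m \<longleftrightarrow> y \<le> nu x"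
    "restrict R (SK nu mu) = R'"
proof -
  have nl: "nu \<le> lam" and st2: "\<And>x. lam (x + 1) \<le> nu x" using st unfolding strip_def by auto
  note spl = SK_split[OF lC muC nuC mn nl]
  have in1: "R (B (x,y)) = R' (B (x,y))" "R' (B (x,y)) < m" if "mu x < y" "y \<le> nu x" for x y
  proof -
    have "B (x,y) \<in> SK nu mu" using that SK_pt[OF nuC muC] by simp
    then show "R (B (x,y)) = R' (B (x,y))" "R' (B (x,y)) < m" using vals unfolding R_def glue_def by auto
  qed
  have in2: "R (B (x,y)) = m" if "nu x < y" "y \<le> lam x" for x y
  proof -
    have "B (x,y) \<in> SK lam nu" using that SK_pt[OF lC nuC] by simp
    moreover then have "B (x,y) \<notin> SK nu mu" using spl(2) by blast
    ultimately show ?thesis unfolding R_def glue_def by simp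
  qed
  have mnx: "mu x \<le> nu x" for x using mn by (simp add: le_fun_def)
  show pt: "R (B (x,y)) \<noteq> m \<longleftrightarrow> y \<le> nu x" if "mu x < y" "y \<le> lam x" for x y
    using in1[of x y] in2[of x y] that by (cases "y \<le> nu x") auto
  show "R \<in> ssct k n lam mu"
  proof (rule ssctI)
    show "R \<in> extensional (SK lam mu)" unfolding R_def glue_def extensional_def spl(1) by auto
    fix x y1 y2 assume a: "mu x < y1" "y1 < y2" "y2 \<le> lam x"
    show "R (B (x, y1)) \<le> R (B (x, y2))"
    proof (cases "y2 \<le> nu x")
      case True
      then show ?thesis using in1[of x y1] in1[of x y2] a ssct_col[OF R' a(1,2) True] by simp
    next
      case False
      then have "R (B (x, y2)) = m" using in2 a by simp
      moreover have "R (B (x, y1)) \<le> m"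
        using in1[of x y1] in2[of x y1] a by (cases "y1 \<le> nu x") auto
      ultimately show ?thesis by simp
    qed
  next
    fix x1 x2 y assume a: "mu x1 < y" "y \<le> lam x1" "mu x2 < y" "y \<le> lam x2" "x1 < x2"
    have nd: "nu x2 \<le> nu x1" using C_mono[OF nuC] a(5) by simp
    have "lam x2 \<le> lam (x1 + 1)" using C_mono[OF lC] a(5) by simp
    then have "y \<le> nu x1" using st2[of x1] a(4) by linarith
    show "R (B (x1, y)) < R (B (x2, y))"
    proof (cases "y \<le> nu x2")
      case True
      then show ?thesis using in1[of x1 y] in1[of x2 y] a \<open>y \<le> nu x1\<close>
        ssct_row[OF R' a(1) \<open>y \<le> nu x1\<close> a(3) True a(5)] by simp
    next
      case False
      then show ?thesis using in1[of x1 y] in2[of x2 y] a \<open>y \<le> nu x1\<close> by simp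
    qed
  qed
  have Rv1: "R b = R' b" if "b \<in> SK nu mu" for b using that unfolding R_def glue_def by simp
  have Rv2: "R b = m" if "b \<in> SK lam nu" for b using that spl(2) unfolding R_def glue_def by auto
  show "{b \<in> SK lam mu. R b = m} = SK lam nu"
    using Rv1 Rv2 vals spl by (auto simp: less_le)
  show "{b \<in> SK lam mu. R b = a} = {b \<in> SK nu mu. R' b = a}" if "a \<noteq> m" for a
    using Rv1 Rv2 that spl by auto
  show "\<forall>b\<in>SK lam mu. R b \<le> m"
    using Rv1 Rv2 vals spl by (auto simp: less_le)
  show "restrict R (SK nu mu) = R'"
  proof
    fix b show "restrict R (SK nu mu) b = R' b"
      using Rv1 ssct_ext[OF R'] by (auto simp: extensional_def)
  qed
qed


lemma card_T_split:
  fixes e :: "'a::linorder \<Rightarrow> nat"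
  assumes lC: "lam \<in> C" and muC: "mu \<in> C" and ml: "mu \<le> lam"
    and fin: "finite {a. e a \<noteq> 0}" and ne: "{a. e a \<noteq> 0} \<noteq> {}"
  defines "m \<equiv> Max {a. e a \<noteq> 0}" and "e' \<equiv> e(Max {a. e a \<noteq> 0} := 0)"
  shows "card (T lam mu e) = (\<Sum>nu \<in> {nu. nu \<in> C \<and> strip lam nu \<and> sz lam nu = int (e m) \<and> mu \<le> nu}. card (T nu mu e'))"
proof -
  define N where "N = {nu. nu \<in> C \<and> strip lam nu \<and> sz lam nu = int (e m) \<and> mu \<le> nu}"
  have e'_m: "e' = e(m := 0)" unfolding e'_def m_def ..
  have vmax: "e a \<noteq> 0 \<Longrightarrow> a \<le> m" for a unfolding m_def using fin by simp
  have fin': "finite {a. e' a \<noteq> 0}" using fin by (rule rev_finite_subset) (auto simp: e'_m)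
  have finN: "finite N"
    by (rule finite_subset[OF _ finite_Dn[of lam "int (e m)"]]) (auto simp: N_def Dn_def strip_def)
  have valsT: "\<forall>b\<in>SK lam mu. R b \<le> m" if "R \<in> T lam mu e" for R
    using T_val[OF lC muC that] vmax by blast
  define F where "F R = (nuR lam mu m R, restrict R (SK (nuR lam mu m R) mu))" for R
  define G where "G p = glue (fst p) lam mu m (snd p)" for p
  have bij: "bij_betw F (T lam mu e) (Sigma N (\<lambda>nu. T nu mu e'))"
  proof (rule bij_betw_byWitness[where f'=G])
    show "\<forall>R\<in>T lam mu e. G (F R) = R"
    proof
      fix R assume R: "R \<in> T lam mu e"
      have Rs: "R \<in> ssct k n lam mu" using R by (simp add: T_def)
      note fw = fwd[OF Rs ml lC muC valsT[OF R]]
      let ?nu = "nuR lam mu m R"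
      have nl: "?nu \<le> lam" using fw(3) by (simp add: strip_def)
      note spl = SK_split[OF lC muC fw(1,2) nl]
      show "G (F R) = R"
      proof
        fix b
        show "G (F R) b = R b"
          using fw(4) ssct_ext[OF Rs] spl unfolding G_def F_def glue_def
          by (auto simp: extensional_def)
      qed
    qed
    show "\<forall>p\<in>Sigma N (\<lambda>nu. T nu mu e'). F (G p) = p"
    proof
      fix p assume p: "p \<in> Sigma N (\<lambda>nu. T nu mu e')"
      obtain nu R' where pe: "p = (nu, R')" by (cases p)
      have nuN: "nu \<in> N" and R'T: "R' \<in> T nu mu e'" using p pe by auto
      have nuC: "nu \<in> C" and st: "strip lam nu" and mn: "mu \<le> nu" using nuN by (auto simp: N_def)
      have R's: "R' \<in> ssct k n nu mu" using R'T by (simp add: T_def)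
      have v': "\<forall>b\<in>SK nu mu. R' b < m"
      proof
        fix b assume "b \<in> SK nu mu"
        then have "e' (R' b) \<noteq> 0" using T_val[OF nuC muC R'T] by blast
        then show "R' b < m" using vmax[of "R' b"] by (auto simp: e'_m split: if_splits)
      qed
      note bw = bwd[OF lC muC nuC mn st R's v']
      let ?R = "glue nu lam mu m R'"
      have Rs: "?R \<in> ssct k n lam mu" using bw(1) .
      have nuR_eq: "nuR lam mu m ?R = nu"
      proof
        fix x
        note ch = char[OF Rs ml lC muC bw(4), of x]
        show "nuR lam mu m ?R x = nu x"
        proof (rule threshold_unique[where lo="mu x" and hi="lam x"])
          show "mu x \<le> nuR lam mu m ?R x" "nuR lam mu m ?R x \<le> lam x" using ch by auto
          show "mu x \<le> nu x" "nu x \<le> lam x" using mn st by (auto simp: le_fun_def strip_def)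
          fix y assume "mu x < y" "y \<le> lam x"
          then show "y \<le> nuR lam mu m ?R x \<longleftrightarrow> y \<le> nu x" using ch bw(5)[of x y] by blast
        qed
      qed
      show "F (G p) = p" unfolding F_def G_def pe using nuR_eq bw(6) by simp
    qed
    show "F ` T lam mu e \<subseteq> Sigma N (\<lambda>nu. T nu mu e')"
    proof
      fix q assume "q \<in> F ` T lam mu e"
      then obtain R where R: "R \<in> T lam mu e" and q: "q = F R" by auto
      have Rs: "R \<in> ssct k n lam mu" and wt: "tab_wt k n lam mu R = e" using R by (auto simp: T_def)
      note fw = fwd[OF Rs ml lC muC valsT[OF R]]
      let ?nu = "nuR lam mu m R"
      have nl: "?nu \<le> lam" using fw(3) by (simp add: strip_def)
      have "card (SK lam ?nu) = tab_wt k n lam mu R m" unfolding wt_eq fw(4) ..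
      then have "card (SK lam ?nu) = e m" using wt by simp
      then have "sz lam ?nu = int (e m)" using card_SK[OF lC fw(1) nl] by simp
      then have nuN: "?nu \<in> N" using fw(1,2,3) by (simp add: N_def)
      have "tab_wt k n ?nu mu (restrict R (SK ?nu mu)) = e'"
      proof
        fix a
        have "{b \<in> SK ?nu mu. restrict R (SK ?nu mu) b = a} = {b \<in> SK ?nu mu. R b = a}" by auto
        then have "tab_wt k n ?nu mu (restrict R (SK ?nu mu)) a = card {b \<in> SK ?nu mu. R b = a}"
          unfolding wt_eq by simp
        also have "\<dots> = e' a"
        proof (cases "a = m")
          case True
          have E: "{b \<in> SK ?nu mu. R b = a} = {}"
          proof (rule equals0I)
            fix b assume bb: "b \<in> {b \<in> SK ?nu mu. R b = a}"
            then have b1: "b \<in> SK ?nu mu" and b2: "R b = m" using True by simp_all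
            have "R b \<noteq> m" using bspec[OF fw(5) b1] .
            then show False using b2 by contradiction
          qed
          have "card {b \<in> SK ?nu mu. R b = a} = 0" by (simp only: E card.empty)
          with True show ?thesis by (simp add: e'_m)
        next
          case False
          have "card {b \<in> SK ?nu mu. R b = a} = tab_wt k n lam mu R a" unfolding wt_eq fw(6)[OF False] ..
          also have "\<dots> = e a" using wt by simp
          also have "\<dots> = e' a" using False unfolding e'_m by simp
          finally show ?thesis .
        qed
        finally show "tab_wt k n ?nu mu (restrict R (SK ?nu mu)) a = e' a" .
      qed
      then have "restrict R (SK ?nu mu) \<in> T ?nu mu e'" using fw(7) by (simp add: T_def)
      then show "q \<in> Sigma N (\<lambda>nu. T nu mu e')" using nuN q unfolding F_def by simp
    qed
    show "G ` Sigma N (\<lambda>nu. T nu mu e') \<subseteq> T lam mu e"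
    proof
      fix R assume "R \<in> G ` Sigma N (\<lambda>nu. T nu mu e')"
      then obtain p where p: "p \<in> Sigma N (\<lambda>nu. T nu mu e')" and Rp: "R = G p" by (rule imageE)
      obtain nu R' where pe: "p = (nu, R')" by (cases p)
      have nuN: "nu \<in> N" and R'T: "R' \<in> T nu mu e'" using p pe by auto
      have Re: "R = glue nu lam mu m R'" using Rp pe by (simp add: G_def)
      have nuC: "nu \<in> C" and st: "strip lam nu" and mn: "mu \<le> nu" and szn: "sz lam nu = int (e m)"
        using nuN by (auto simp: N_def)
      have nl: "nu \<le> lam" using st by (simp add: strip_def)
      have R's: "R' \<in> ssct k n nu mu" and wt': "tab_wt k n nu mu R' = e'" using R'T by (auto simp: T_def)
      have v': "\<forall>b\<in>SK nu mu. R' b < m"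
      proof
        fix b assume "b \<in> SK nu mu"
        then have "e' (R' b) \<noteq> 0" using T_val[OF nuC muC R'T] by blast
        then show "R' b < m" using vmax[of "R' b"] by (auto simp: e'_m split: if_splits)
      qed
      note bw = bwd[OF lC muC nuC mn st R's v']
      have "tab_wt k n lam mu R = e"
      proof
        fix a
        show "tab_wt k n lam mu R a = e a"
        proof (cases "a = m")
          case True
          have c: "card (SK lam nu) = e m" using card_SK[OF lC nuC nl] szn by simp
          have "tab_wt k n lam mu R a = card (SK lam nu)" unfolding wt_eq Re True bw(2) ..
          then show ?thesis using c True by simp
        next
          case False
          have "tab_wt k n lam mu R a = card {b \<in> SK nu mu. R' b = a}"
            unfolding wt_eq Re bw(3)[OF False] ..
          also have "\<dots> = tab_wt k n nu mu R' a" unfolding wt_eq ..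
          also have "\<dots> = e' a" using wt' by simp
          also have "\<dots> = e a" using False unfolding e'_m by simp
          finally show ?thesis .
        qed
      qed
      then show "R \<in> T lam mu e" using bw(1) Re by (simp add: T_def)
    qed
  qed
  have "card (T lam mu e) = card (Sigma N (\<lambda>nu. T nu mu e'))" using bij by (rule bij_betw_same_card)
  also have "\<dots> = (\<Sum>nu\<in>N. card (T nu mu e'))"
    by (rule card_SigmaI[OF finN]) (auto simp: N_def intro: T_finite[OF _ muC fin'])
  finally show ?thesis unfolding N_def .
qed

lemma R1:
  fixes e :: "'a::linorder \<Rightarrow> nat"
  assumes fin: "finite {a. e a \<noteq> 0}" and ne: "{a. e a \<noteq> 0} \<noteq> {}"
  defines "m \<equiv> Max {a. e a \<noteq> 0}" and "e' \<equiv> e(Max {a. e a \<noteq> 0} := 0)"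
  shows "S e lam mu = fsum (\<lambda>nu. V (e m) lam nu * S e' nu mu)"
proof (cases "lam \<in> C \<and> mu \<in> C \<and> mu \<le> lam")
  case False
  have "V (e m) lam nu * S e' nu mu = 0" for nu
  proof (rule ccontr)
    assume "V (e m) lam nu * S e' nu mu \<noteq> 0"
    then have "lam \<in> C" "nu \<le> lam" "mu \<in> C" "mu \<le> nu"
      by (auto simp: V_def S_def strip_def split: if_splits)
    then show False using False order_trans by blast
  qed
  moreover have "S e lam mu = 0" unfolding S_def by (rule if_not_P[OF False])
  ultimately show ?thesis by (simp add: fsum_def)
next
  case True
  then have lC: "lam \<in> C" and muC: "mu \<in> C" and ml: "mu \<le> lam" by auto
  define N where "N = {nu. nu \<in> C \<and> strip lam nu \<and> sz lam nu = int (e m) \<and> mu \<le> nu}"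
  have finN: "finite N"
    by (rule finite_subset[OF _ finite_Dn[of lam "int (e m)"]]) (auto simp: N_def Dn_def strip_def)
  have "fsum (\<lambda>nu. V (e m) lam nu * S e' nu mu) = (\<Sum>nu\<in>N. V (e m) lam nu * S e' nu mu)"
    by (rule fsum_eq[OF finN]) (auto simp: N_def V_def S_def split: if_splits)
  also have "\<dots> = (\<Sum>nu\<in>N. card (T nu mu e'))"
    by (rule sum.cong) (auto simp: N_def V_def S_def cyl_schur_T muC lC)
  also have "\<dots> = card (T lam mu e)" unfolding N_def e'_def m_def
    by (rule card_T_split[OF lC muC ml fin ne, symmetric])
  finally show ?thesis using True by (simp add: S_def cyl_schur_T)
qed

end

context cp
begin

lemma fsum_at: assumes "\<And>x. x \<noteq> c \<Longrightarrow> g x = 0" shows "fsum g = g c"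
proof -
  have "fsum g = sum g {c}"
  proof (rule fsum_eq)
    show "finite {c}" by simp
    fix x assume gx: "g x \<noteq> 0"
    show "x \<in> {c}"
    proof (rule ccontr)
      assume "x \<notin> {c}"
      then have "x \<noteq> c" by simp
      then have "g x = 0" by (rule assms)
      then show False using gx by simp
    qed
  qed
  then show ?thesis by simp
qed

lemma supp_step:
  fixes f :: "'a::linorder \<Rightarrow> nat"
  assumes fin: "finite {a. f a \<noteq> 0}" and ne: "{a. f a \<noteq> 0} \<noteq> {}"
  defines "m \<equiv> Max {a. f a \<noteq> 0}"
  shows "finite {a. (f(m := 0)) a \<noteq> 0}" "card {a. (f(m := 0)) a \<noteq> 0} < card {a. f a \<noteq> 0}"
proof -
  have mi: "m \<in> {a. f a \<noteq> 0}" unfolding m_def using fin ne by (rule Max_in)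
  have eq: "{a. (f(m := 0)) a \<noteq> 0} = {a. f a \<noteq> 0} - {m}" by auto
  show "finite {a. (f(m := 0)) a \<noteq> 0}" unfolding eq using fin by simp
  show "card {a. (f(m := 0)) a \<noteq> 0} < card {a. f a \<noteq> 0}" unfolding eq
    by (rule card_Diff1_less[OF fin mi])
qed

lemma V_supp': "0 < V p a nu \<Longrightarrow> nu \<in> Dn a (int p) \<and> a \<in> Up nu (int p)"
  using V_supp by simp

lemma S_supp': "0 < S e a mu \<Longrightarrow> mu \<in> Dn a (int (esz e)) \<and> a \<in> Up mu (int (esz e)) \<and> finite {x. e x \<noteq> 0}"
  using S_supp by simp

lemma zero_fun: assumes "{a. f a \<noteq> 0} = {}" shows "f = (\<lambda>_. 0::nat)"
proof
  fix a
  have "a \<notin> {a. f a \<noteq> 0}" using assms by blast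
  then show "f a = 0" by simp
qed

lemma L1:
  fixes f :: "'a::linorder \<Rightarrow> nat"
  assumes "finite {x. f x \<noteq> 0}"
  shows "fsum (\<lambda>nu. V p a nu * S f b nu) = fsum (\<lambda>r. V p r b * S f r a)"
  using assms
proof (induction "card {x. f x \<noteq> 0}" arbitrary: f a b rule: less_induct)
  case less
  show ?case
  proof (cases "{x. f x \<noteq> 0} = {}")
    case True
    then have f0: "f = (\<lambda>_. 0)" by (rule zero_fun)
    have "fsum (\<lambda>nu. V p a nu * S f b nu) = V p a b * S f b b"
      by (rule fsum_at) (simp add: f0 S_zero)
    also have "\<dots> = V p a b" by (auto simp: f0 S_zero V_def)
    also have "\<dots> = V p a b * S f a a" by (auto simp: f0 S_zero V_def)
    also have "\<dots> = fsum (\<lambda>r. V p r b * S f r a)"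
      by (rule fsum_at[symmetric]) (auto simp: f0 S_zero)
    finally show ?thesis .
  next
    case False
    define m where "m = Max {x. f x \<noteq> 0}"
    define f' where "f' = f(m := 0)"
    define q where "q = f m"
    have fin': "finite {x. f' x \<noteq> 0}" and lt: "card {x. f' x \<noteq> 0} < card {x. f x \<noteq> 0}"
      using supp_step[OF less.prems False] unfolding f'_def m_def by auto
    have R1f: "S f l u = fsum (\<lambda>nu. V q l nu * S f' nu u)" for l u
      using R1[OF less.prems False] unfolding q_def m_def f'_def by simp
    have IH: "fsum (\<lambda>nu. V p a' nu * S f' b' nu) = fsum (\<lambda>r. V p r b' * S f' r a')" for a' b'
      using less.hyps[OF lt fin'] .
    have "fsum (\<lambda>nu. V p a nu * S f b nu) = fsum (\<lambda>nu. V p a nu * fsum (\<lambda>s. V q b s * S f' s nu))"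
      unfolding R1f ..
    also have "\<dots> = fsum (\<lambda>nu. fsum (\<lambda>s. V p a nu * (V q b s * S f' s nu)))"
      by (simp only: fsum_cmult)
    also have "\<dots> = fsum (\<lambda>s. fsum (\<lambda>nu. V p a nu * (V q b s * S f' s nu)))"
      by (rule fsum_swap[OF finite_Dn[of a "int p"] finite_Dn[of b "int q"]]) (auto dest!: V_supp V_supp')
    also have "\<dots> = fsum (\<lambda>s. V q b s * fsum (\<lambda>nu. V p a nu * S f' s nu))"
      by (simp only: fsum_cmult[symmetric] mult.left_commute)
    also have "\<dots> = fsum (\<lambda>s. V q b s * fsum (\<lambda>t. V p t s * S f' t a))"
      unfolding IH ..
    also have "\<dots> = fsum (\<lambda>s. fsum (\<lambda>t. V q b s * (V p t s * S f' t a)))"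
      by (simp only: fsum_cmult)
    also have "\<dots> = fsum (\<lambda>t. fsum (\<lambda>s. V q b s * (V p t s * S f' t a)))"
      by (rule fsum_swap[OF finite_Dn[of b "int q"] finite_Up[of a "int (esz f')"]]) (auto dest!: V_supp S_supp V_supp' S_supp')
    also have "\<dots> = fsum (\<lambda>t. S f' t a * fsum (\<lambda>s. V p t s * V q b s))"
      by (simp only: fsum_cmult[symmetric] mult_ac)
    also have "\<dots> = fsum (\<lambda>t. S f' t a * fsum (\<lambda>r. V p r b * V q r t))"
      unfolding commute1 ..
    also have "\<dots> = fsum (\<lambda>t. fsum (\<lambda>r. S f' t a * (V p r b * V q r t)))"
      by (simp only: fsum_cmult)
    also have "\<dots> = fsum (\<lambda>r. fsum (\<lambda>t. S f' t a * (V p r b * V q r t)))"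
      by (rule fsum_swap[OF finite_Up[of a "int (esz f')"] finite_Up[of b "int p"]]) (auto dest!: V_supp S_supp V_supp' S_supp')
    also have "\<dots> = fsum (\<lambda>r. V p r b * fsum (\<lambda>t. V q r t * S f' t a))"
      by (simp only: fsum_cmult[symmetric] mult_ac)
    also have "\<dots> = fsum (\<lambda>r. V p r b * S f r a)"
      unfolding R1f ..
    finally show ?thesis .
  qed
qed

lemma Main:
  fixes e f :: "'a::linorder \<Rightarrow> nat"
  assumes "finite {x. e x \<noteq> 0}" "finite {x. f x \<noteq> 0}"
  shows "fsum (\<lambda>mu. S e a mu * S f b mu) = fsum (\<lambda>l. S e l b * S f l a)"
  using assms
proof (induction "card {x. e x \<noteq> 0}" arbitrary: e a b rule: less_induct)
  case less
  show ?case
  proof (cases "{x. e x \<noteq> 0} = {}")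
    case True
    then have e0: "e = (\<lambda>_. 0)" by (rule zero_fun)
    have "fsum (\<lambda>mu. S e a mu * S f b mu) = S e a a * S f b a"
      by (rule fsum_at) (simp add: e0 S_zero)
    also have "\<dots> = S f b a" by (auto simp: e0 S_zero S_def)
    also have "\<dots> = S e b b * S f b a" by (auto simp: e0 S_zero S_def)
    also have "\<dots> = fsum (\<lambda>l. S e l b * S f l a)"
      by (rule fsum_at[symmetric]) (auto simp: e0 S_zero)
    finally show ?thesis .
  next
    case False
    define m where "m = Max {x. e x \<noteq> 0}"
    define e' where "e' = e(m := 0)"
    define p where "p = e m"
    have fin': "finite {x. e' x \<noteq> 0}" and lt: "card {x. e' x \<noteq> 0} < card {x. e x \<noteq> 0}"
      using supp_step[OF less.prems(1) False] unfolding e'_def m_def by auto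
    have R1e: "S e l u = fsum (\<lambda>nu. V p l nu * S e' nu u)" for l u
      using R1[OF less.prems(1) False] unfolding p_def m_def e'_def by simp
    have IH: "fsum (\<lambda>mu. S e' a' mu * S f b' mu) = fsum (\<lambda>l. S e' l b' * S f l a')" for a' b'
      using less.hyps[OF lt fin' less.prems(2)] .
    have "fsum (\<lambda>mu. S e a mu * S f b mu) = fsum (\<lambda>mu. fsum (\<lambda>nu. V p a nu * S e' nu mu) * S f b mu)"
      unfolding R1e ..
    also have "\<dots> = fsum (\<lambda>mu. fsum (\<lambda>nu. V p a nu * S e' nu mu * S f b mu))"
      by (simp only: fsum_multc)
    also have "\<dots> = fsum (\<lambda>nu. fsum (\<lambda>mu. V p a nu * S e' nu mu * S f b mu))"
      by (rule fsum_swap[OF finite_Dn[of b "int (esz f)"] finite_Dn[of a "int p"]]) (auto dest!: V_supp S_supp V_supp' S_supp')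
    also have "\<dots> = fsum (\<lambda>nu. V p a nu * fsum (\<lambda>mu. S e' nu mu * S f b mu))"
      by (simp only: fsum_cmult[symmetric] mult.assoc)
    also have "\<dots> = fsum (\<lambda>nu. V p a nu * fsum (\<lambda>l. S e' l b * S f l nu))"
      unfolding IH ..
    also have "\<dots> = fsum (\<lambda>nu. fsum (\<lambda>l. V p a nu * (S e' l b * S f l nu)))"
      by (simp only: fsum_cmult)
    also have "\<dots> = fsum (\<lambda>l. fsum (\<lambda>nu. V p a nu * (S e' l b * S f l nu)))"
      by (rule fsum_swap[OF finite_Dn[of a "int p"] finite_Up[of b "int (esz e')"]]) (auto dest!: V_supp S_supp V_supp' S_supp')
    also have "\<dots> = fsum (\<lambda>l. S e' l b * fsum (\<lambda>nu. V p a nu * S f l nu))"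
      by (simp only: fsum_cmult[symmetric] mult_ac)
    also have "\<dots> = fsum (\<lambda>l. S e' l b * fsum (\<lambda>r. V p r l * S f r a))"
      unfolding L1[OF less.prems(2)] ..
    also have "\<dots> = fsum (\<lambda>l. fsum (\<lambda>r. S e' l b * (V p r l * S f r a)))"
      by (simp only: fsum_cmult)
    also have "\<dots> = fsum (\<lambda>r. fsum (\<lambda>l. S e' l b * (V p r l * S f r a)))"
      by (rule fsum_swap[OF finite_Up[of b "int (esz e')"] finite_Up[of a "int (esz f)"]]) (auto dest!: V_supp S_supp V_supp' S_supp')
    also have "\<dots> = fsum (\<lambda>r. fsum (\<lambda>l. V p r l * S e' l b) * S f r a)"
      by (simp only: fsum_multc[symmetric] fsum_cmult[symmetric] mult_ac)
    also have "\<dots> = fsum (\<lambda>r. S e r b * S f r a)"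
      unfolding R1e ..
    finally show ?thesis .
  qed
qed


lemma cp_final:
  fixes e f :: "'a::linorder \<Rightarrow> nat"
  assumes aC: "alpha \<in> cylpar k n" and bC: "beta \<in> cylpar k n"
  shows "finite {mu. mu \<in> cylpar k n \<and> mu \<le> alpha \<and> mu \<le> beta \<and>
                 cyl_schur k n alpha mu e * cyl_schur k n beta mu f \<noteq> 0}
       \<and> finite {lam. lam \<in> cylpar k n \<and> alpha \<le> lam \<and> beta \<le> lam \<and>
                 cyl_schur k n lam beta e * cyl_schur k n lam alpha f \<noteq> 0}
       \<and> (\<Sum>mu | mu \<in> cylpar k n \<and> mu \<le> alpha \<and> mu \<le> beta \<and>
                 cyl_schur k n alpha mu e * cyl_schur k n beta mu f \<noteq> 0.
             cyl_schur k n alpha mu e * cyl_schur k n beta mu f)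
         = (\<Sum>lam | lam \<in> cylpar k n \<and> alpha \<le> lam \<and> beta \<le> lam \<and>
                 cyl_schur k n lam beta e * cyl_schur k n lam alpha f \<noteq> 0.
             cyl_schur k n lam beta e * cyl_schur k n lam alpha f)"
proof -
  have P: "{mu. mu \<in> cylpar k n \<and> mu \<le> alpha \<and> mu \<le> beta \<and>
                 cyl_schur k n alpha mu e * cyl_schur k n beta mu f \<noteq> 0}
         = {mu. S e alpha mu * S f beta mu \<noteq> 0}"
    using aC bC by (auto simp: S_def split: if_splits)
  have Q: "{lam. lam \<in> cylpar k n \<and> alpha \<le> lam \<and> beta \<le> lam \<and>
                 cyl_schur k n lam beta e * cyl_schur k n lam alpha f \<noteq> 0}
         = {lam. S e lam beta * S f lam alpha \<noteq> 0}"
    using aC bC by (auto simp: S_def split: if_splits)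
  have fP: "finite {mu. S e alpha mu * S f beta mu \<noteq> 0}"
    by (rule finite_subset[OF _ finite_Dn[of alpha "int (esz e)"]]) (auto dest!: S_supp S_supp')
  have fQ: "finite {lam. S e lam beta * S f lam alpha \<noteq> 0}"
    by (rule finite_subset[OF _ finite_Up[of beta "int (esz e)"]]) (auto dest!: S_supp S_supp')
  have sP: "(\<Sum>mu | mu \<in> cylpar k n \<and> mu \<le> alpha \<and> mu \<le> beta \<and>
                 cyl_schur k n alpha mu e * cyl_schur k n beta mu f \<noteq> 0.
             cyl_schur k n alpha mu e * cyl_schur k n beta mu f) = fsum (\<lambda>mu. S e alpha mu * S f beta mu)"
    unfolding P fsum_def by (rule sum.cong) (auto simp: S_def split: if_splits)
  have sQ: "(\<Sum>lam | lam \<in> cylpar k n \<and> alpha \<le> lam \<and> beta \<le> lam \<and>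
                 cyl_schur k n lam beta e * cyl_schur k n lam alpha f \<noteq> 0.
             cyl_schur k n lam beta e * cyl_schur k n lam alpha f) = fsum (\<lambda>lam. S e lam beta * S f lam alpha)"
    unfolding Q fsum_def by (rule sum.cong) (auto simp: S_def split: if_splits)
  have eq: "fsum (\<lambda>mu. S e alpha mu * S f beta mu) = fsum (\<lambda>lam. S e lam beta * S f lam alpha)"
  proof (cases "finite {x. e x \<noteq> 0} \<and> finite {x. f x \<noteq> 0}")
    case True
    then show ?thesis using Main by blast
  next
    case False
    then have z1: "S e alpha mu * S f beta mu = 0" for mu using False S_supp by (metis mult_eq_0_iff)
    have z2: "S e lam beta * S f lam alpha = 0" for lam using False S_supp by (metis mult_eq_0_iff)
    show ?thesis using z1 z2 by (simp add: fsum_def)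
  qed
  show ?thesis
  proof (intro conjI)
    show "finite {mu. mu \<in> cylpar k n \<and> mu \<le> alpha \<and> mu \<le> beta \<and>
                 cyl_schur k n alpha mu e * cyl_schur k n beta mu f \<noteq> 0}" unfolding P by (rule fP)
    show "finite {lam. lam \<in> cylpar k n \<and> alpha \<le> lam \<and> beta \<le> lam \<and>
                 cyl_schur k n lam beta e * cyl_schur k n lam alpha f \<noteq> 0}" unfolding Q by (rule fQ)
  qed (unfold sP sQ, rule eq)
qed

end

theorem mainTheorem2:
  fixes k n :: int and alpha beta :: "int \<Rightarrow> int" and e f :: "'a::linorder \<Rightarrow> nat"
  assumes "1 \<le> k" and "k < n"
    and "alpha \<in> cylpar k n" and "beta \<in> cylpar k n"
  shows "finite {mu. mu \<in> cylpar k n \<and> mu \<le> alpha \<and> mu \<le> beta \<and>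
                 cyl_schur k n alpha mu e * cyl_schur k n beta mu f \<noteq> 0}
       \<and> finite {lam. lam \<in> cylpar k n \<and> alpha \<le> lam \<and> beta \<le> lam \<and>
                 cyl_schur k n lam beta e * cyl_schur k n lam alpha f \<noteq> 0}
       \<and> (\<Sum>mu | mu \<in> cylpar k n \<and> mu \<le> alpha \<and> mu \<le> beta \<and>
                 cyl_schur k n alpha mu e * cyl_schur k n beta mu f \<noteq> 0.
             cyl_schur k n alpha mu e * cyl_schur k n beta mu f)
         = (\<Sum>lam | lam \<in> cylpar k n \<and> alpha \<le> lam \<and> beta \<le> lam \<and>
                 cyl_schur k n lam beta e * cyl_schur k n lam alpha f \<noteq> 0.
             cyl_schur k n lam beta e * cyl_schur k n lam alpha f)"
proof -
  interpret cp k n by unfold_locales (use assms in auto)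
  show ?thesis by (rule cp_final[OF assms(3) assms(4)])
qed

end
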